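(* Let $\mathcal{A}$ be a unital algebra over a field $F$ with $\operatorname{char}(F)\neq2$ such that $\mathcal{A}=R(\mathcal{A})$. Then $\operatorname{QJDer}(\mathcal{A})=\operatorname{Cent}(\mathcal{A})+\operatorname{JDer}(\mathcal{A})$.
   Context: $R(\mathcal{A})$ is the subalgebra of $\mathcal{A}$ generated by all idempotents of $\mathcal{A}$. $x\circ y=xy+yx$. $\operatorname{QJDer}(\mathcal{A})$: linear $f:\mathcal{A}\to\mathcal{A}$ for which there is a linear $h$ with $f(x)\circ y+x\circ f(y)=h(x\circ y)$ for all $x,y$. $\operatorname{Cent}(\mathcal{A})$: linear $f$ with $f(xy)=f(x)y=xf(y)$. $\operatorname{JDer}(\mathcal{A})$: linear $d$ with $d(x\circ y)=d(x)\circ y+x\circ d(y)$. Sums of sets of maps are sets of pointwise sums. *)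

theory Defs
  imports Main "HOL.Vector_Spaces"
begin

text \<open>An associative unital algebra over a field 'k is modelled as a type 'a of class ring_1
  together with a scalar multiplication smult making 'a a 'k-vector space such that the
  multiplication is 'k-bilinear.\<close>

definition unital_algebra :: "('k::field \<Rightarrow> 'a::ring_1 \<Rightarrow> 'a) \<Rightarrow> bool" where
  "unital_algebra smult \<longleftrightarrow> Vector_Spaces.vector_space smult \<and>
     (\<forall>c x y. smult c (x * y) = smult c x * y \<and> smult c (x * y) = x * smult c y)"

definition jprod :: "'a::ring \<Rightarrow> 'a \<Rightarrow> 'a" (infixl "\<circle>" 70) where
  "x \<circle> y = x * y + y * x"

inductive_set R_alg :: "('k::field \<Rightarrow> 'a::ring_1 \<Rightarrow> 'a) \<Rightarrow> 'a set" for smult where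
  idem: "e * e = e \<Longrightarrow> e \<in> R_alg smult"
| zero: "0 \<in> R_alg smult"
| one: "1 \<in> R_alg smult"
| add: "x \<in> R_alg smult \<Longrightarrow> y \<in> R_alg smult \<Longrightarrow> x + y \<in> R_alg smult"
| scale: "x \<in> R_alg smult \<Longrightarrow> smult c x \<in> R_alg smult"
| mult: "x \<in> R_alg smult \<Longrightarrow> y \<in> R_alg smult \<Longrightarrow> x * y \<in> R_alg smult"

definition QJDer :: "('k::field \<Rightarrow> 'a::ring_1 \<Rightarrow> 'a) \<Rightarrow> ('a \<Rightarrow> 'a) set" where
  "QJDer smult = {f. Vector_Spaces.linear smult smult f \<and>
     (\<exists>h. Vector_Spaces.linear smult smult h \<and> (\<forall>x y. f x \<circle> y + x \<circle> f y = h (x \<circle> y)))}"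

definition Cent :: "('k::field \<Rightarrow> 'a::ring_1 \<Rightarrow> 'a) \<Rightarrow> ('a \<Rightarrow> 'a) set" where
  "Cent smult = {f. Vector_Spaces.linear smult smult f \<and>
     (\<forall>x y. f (x * y) = f x * y \<and> f (x * y) = x * f y)}"

definition JDer :: "('k::field \<Rightarrow> 'a::ring_1 \<Rightarrow> 'a) \<Rightarrow> ('a \<Rightarrow> 'a) set" where
  "JDer smult = {d. Vector_Spaces.linear smult smult d \<and>
     (\<forall>x y. d (x \<circle> y) = d x \<circle> y + x \<circle> d y)}"

definition map_set_plus :: "('a \<Rightarrow> 'b::plus) set \<Rightarrow> ('a \<Rightarrow> 'b) set \<Rightarrow> ('a \<Rightarrow> 'b) set" where
  "map_set_plus S T = {(\<lambda>x. f x + g x) | f g. f \<in> S \<and> g \<in> T}"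

end

theory Submission
  imports Defs
begin

lemma two_cancel:
  fixes smult :: "'k::field \<Rightarrow> 'a::ring_1 \<Rightarrow> 'a"
  assumes vs: "Vector_Spaces.vector_space smult" and two: "(2::'k) \<noteq> 0"
    and w: "(w::'a) + w = 0"
  shows "w = 0"
proof -
  note A = vs[unfolded Vector_Spaces.vector_space_def]
  have s2: "smult 2 w = 0"
    using A w by (metis one_add_one)
  have z: "smult c 0 = 0" for c
    using A by (metis add_cancel_right_right)
  have "w = smult (inverse 2 * 2) w" using A two by simp
  also have "\<dots> = smult (inverse 2) (smult 2 w)" using A by metis
  also have "\<dots> = 0" using s2 z by simp
  finally show ?thesis .
qed

lemma jprod_1: "x \<circle> (1::'a::ring_1) = x + x" "(1::'a) \<circle> x = x + x"
  by (simp_all add: jprod_def)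

lemma jprod_comm: "x \<circle> y = y \<circle> (x::'a::ring)"
  by (simp add: jprod_def add.commute)

lemma idem_comm:
  fixes e u a :: "'a::ring_1"
  assumes ee: "e * e = e"
    and E: "u \<circle> e + e \<circle> u = u \<circle> 1 + e \<circle> a"
  shows "a * e = e * a"
proof -
  have ee': "e * (e * z) = e * z" for z using ee by (metis mult.assoc)
  have E': "u*e + e*u + (u*e + e*u) = u + u + (e*a + a*e)"
    using E by (simp add: jprod_def algebra_simps)
  have L: "e * (u*e + e*u + (u*e + e*u)) * (1 - e) = (e*u - e*u*e) + (e*u - e*u*e)"
    by (simp add: algebra_simps ee ee')
  have R: "e * (u + u + (e*a + a*e)) * (1 - e) = (e*u - e*u*e) + (e*u - e*u*e) + (e*a - e*a*e)"
    by (simp add: algebra_simps ee ee')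
  have 1: "e*a = e*a*e" using L R E' by (metis add_cancel_right_right eq_iff_diff_eq_0)
  have L2: "(1 - e) * (u*e + e*u + (u*e + e*u)) * e = (u*e - e*u*e) + (u*e - e*u*e)"
    by (simp add: algebra_simps ee ee')
  have R2: "(1 - e) * (u + u + (e*a + a*e)) * e = (u*e - e*u*e) + (u*e - e*u*e) + (a*e - e*a*e)"
    by (simp add: algebra_simps ee ee')
  have 2: "a*e = e*a*e" using L2 R2 E' by (metis add_cancel_right_right eq_iff_diff_eq_0)
  show ?thesis using 1 2 by simp
qed

theorem proposition4p2:
  fixes smult :: "'k::field \<Rightarrow> 'a::ring_1 \<Rightarrow> 'a"
  assumes "unital_algebra smult"
    and "(2::'k) \<noteq> 0"
    and "R_alg smult = UNIV"
  shows "QJDer smult = map_set_plus (Cent smult) (JDer smult)"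
proof
  have vs: "Vector_Spaces.vector_space smult"
    and bil: "\<And>c x y. smult c (x * y) = smult c x * y" "\<And>c x y. smult c (x * y) = x * smult c y"
    using assms(1) unfolding unital_algebra_def by metis+
  show "QJDer smult \<subseteq> map_set_plus (Cent smult) (JDer smult)"
  proof
    fix f assume "f \<in> QJDer smult"
    then obtain h where lf: "Vector_Spaces.linear smult smult f"
      and lh: "Vector_Spaces.linear smult smult h"
      and H: "\<And>x y. f x \<circle> y + x \<circle> f y = h (x \<circle> y)"
      unfolding QJDer_def by blast
    have fadd: "\<And>x y. f (x + y) = f x + f y" and fsc: "\<And>c x. f (smult c x) = smult c (f x)"
      using lf unfolding linear_iff by auto
    have hadd: "\<And>x y. h (x + y) = h x + h y"
      using lh unfolding linear_iff by auto
    define a where "a = f 1"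
    have central_e: "a * e = e * a" if "e * e = e" for e
    proof (rule idem_comm[OF that, of "f e"])
      have "f e \<circle> e + e \<circle> f e = h (e \<circle> e)" by (rule H)
      also have "e \<circle> e = e \<circle> 1" using that by (simp add: jprod_def)
      also have "h (e \<circle> 1) = f e \<circle> 1 + e \<circle> a" unfolding a_def by (rule H[symmetric])
      finally show "f e \<circle> e + e \<circle> f e = f e \<circle> 1 + e \<circle> a" .
    qed
    have central: "a * x = x * a" if "x \<in> R_alg smult" for x
      using that
    proof induct
      case (idem e) then show ?case by (rule central_e)
    next
      case zero then show ?case by simp
    next
      case one then show ?case by simp
    next
      case (add x y) then show ?case by (simp add: algebra_simps)
    next
      case (scale x c) then show ?case by (metis bil)
    next
      case (mult x y) then show ?case by (metis mult.assoc)
    qed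
    have cen: "a * x = x * a" for x using central assms(3) by auto
    have h2: "h z = f z + a * z" for z
    proof -
      have "f z \<circle> 1 + z \<circle> a = h (z \<circle> 1)" unfolding a_def by (rule H)
      hence "f z + f z + (a*z + a*z) = h z + h z"
        by (simp add: jprod_1 hadd jprod_def cen algebra_simps)
      hence "(h z - (f z + a*z)) + (h z - (f z + a*z)) = 0"
        by (simp add: algebra_simps)
      hence "h z - (f z + a*z) = 0" by (rule two_cancel[OF vs assms(2)])
      thus ?thesis by simp
    qed
    define c where "c = (\<lambda>x. a * x)"
    define d where "d = (\<lambda>x. f x - a * x)"
    have lc: "Vector_Spaces.linear smult smult c"
      unfolding linear_iff c_def using vs bil by (simp add: distrib_left)
    have "c \<in> Cent smult"
      unfolding Cent_def using lc cen by (simp add: c_def mult.assoc)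
    moreover have "d \<in> JDer smult"
    proof -
      have ld: "Vector_Spaces.linear smult smult d"
        unfolding d_def using lf lc unfolding c_def
        by (rule vector_space_pair.linear_compose_sub[OF vector_space_pair.intro[OF vs vs]])
      have "d (x \<circle> y) = d x \<circle> y + x \<circle> d y" for x y
      proof -
        have "d x \<circle> y + x \<circle> d y = (f x \<circle> y + x \<circle> f y) - (a * (x \<circle> y) + a * (x \<circle> y))"
          unfolding d_def jprod_def
          by (simp add: algebra_simps) (metis cen mult.assoc)
        also have "\<dots> = d (x \<circle> y)" unfolding H h2 d_def by simp
        finally show ?thesis by simp
      qed
      thus ?thesis unfolding JDer_def using ld by simp
    qed
    moreover have "f = (\<lambda>x. c x + d x)" unfolding c_def d_def by simp
    ultimately show "f \<in> map_set_plus (Cent smult) (JDer smult)"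
      unfolding map_set_plus_def by blast
  qed
next
  show "map_set_plus (Cent smult) (JDer smult) \<subseteq> QJDer smult"
  proof
    fix f assume "f \<in> map_set_plus (Cent smult) (JDer smult)"
    then obtain c d where f: "f = (\<lambda>x. c x + d x)" and c: "c \<in> Cent smult" and d: "d \<in> JDer smult"
      unfolding map_set_plus_def by blast
    have lc: "Vector_Spaces.linear smult smult c"
      and cm: "\<And>x y. c (x * y) = c x * y" "\<And>x y. c (x * y) = x * c y"
      using c unfolding Cent_def by blast+
    have ld: "Vector_Spaces.linear smult smult d"
      and dj: "\<And>x y. d (x \<circle> y) = d x \<circle> y + x \<circle> d y"
      using d unfolding JDer_def by auto
    have cadd: "\<And>x y. c (x + y) = c x + c y" using lc unfolding linear_iff by auto
    have vs: "Vector_Spaces.vector_space smult"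
      using assms(1) unfolding unital_algebra_def by metis
    have VP: "vector_space_pair smult smult" by (rule vector_space_pair.intro[OF vs vs])
    have lf: "Vector_Spaces.linear smult smult f"
      unfolding f by (rule vector_space_pair.linear_compose_add[OF VP lc ld])
    define h where "h = (\<lambda>z. (c z + c z) + d z)"
    have lh: "Vector_Spaces.linear smult smult h"
      unfolding h_def
      by (intro vector_space_pair.linear_compose_add[OF VP] lc ld)
    have "f x \<circle> y + x \<circle> f y = h (x \<circle> y)" for x y
    proof -
      have "c x \<circle> y + x \<circle> c y = c (x \<circle> y) + c (x \<circle> y)"
        unfolding jprod_def cadd
        by (simp add: algebra_simps) (metis cm add.commute add.left_commute)
      thus ?thesis using dj[of x y] unfolding f h_def jprod_def by (simp add: algebra_simps)
    qed
    thus "f \<in> QJDer smult" unfolding QJDer_def using lf lh by blast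
  qed
qed

end
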